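(* Let $(A,\circ,[\cdot,\cdot])$ be a finite-dimensional dual pre-Poisson algebra. If there is a nondegenerate skew-symmetric invariant bilinear form $\mathcal{B}$ on $A$, then the representations $(A;L_\circ,R_\circ,L_{[\cdot,\cdot]},R_{[\cdot,\cdot]})$ and $(A^*;-L_\circ^*,-L_\circ^*+R_\circ^*,L_{[\cdot,\cdot]}^*,-L_{[\cdot,\cdot]}^*-R_{[\cdot,\cdot]}^* )$ of $(A,\circ,[\cdot,\cdot])$ are equivalent. Conversely, if these two representations are equivalent, then there exists a nondegenerate invariant bilinear form $\mathcal{B}$ on $A$.
   Context: Field $\mathbb{F}$ of characteristic $0$. A dual pre-Poisson algebra: $x\circ(y\circ z)=(x\circ y)\circ z=(y\circ x)\circ z$; $[x,[y,z]]=[[x,y],z]+[y,[x,z]]$; $[x,y\circ z]=[x,y]\circ z+y\circ[x,z]$; $[x\circ y,z]=x\circ[y,z]+y\circ[x,z]$; $[x,y]\circ z=-[y,x]\circ z$. $L_\diamond(x)y=x\diamond y$, $R_\diamond(x)y=y\diamond x$; for $f:A\to\mathrm{End}(A)$, $f^*:A\to\mathrm{End}(A^* )$ is $\langle f^*(x)a^*,y\rangle=-\langle a^*,f(x)y\rangle$. A bilinear form $\mathcal{B}$ on $A$ is invariant if $\mathcal{B}(x\circ y,z)=\mathcal{B}(x,y\circ z-z\circ y)$ and $\mathcal{B}([x,y],z)=\mathcal{B}(x,[y,z]+[z,y])$ for all $x,y,z$. Two representations $(V_1;l_1,r_1,l'_1,r'_1)$ and $(V_2;l_2,r_2,l'_2,r'_2)$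 (quadruples of linear maps $A\to\mathrm{End}(V_i)$ playing the roles of left/right actions of $\circ$ and of $[\cdot,\cdot]$) are equivalent if there is a linear isomorphism $\varphi:V_1\to V_2$ with $\varphi l_1(x)=l_2(x)\varphi$, $\varphi r_1(x)=r_2(x)\varphi$, $\varphi l'_1(x)=l'_2(x)\varphi$, $\varphi r'_1(x)=r'_2(x)\varphi$ for all $x\in A$. *)

theory Defs
  imports Complex_Main
begin

definition fin_dim_vs :: "('k::field \<Rightarrow> 'a::ab_group_add \<Rightarrow> 'a) \<Rightarrow> bool" where
  "fin_dim_vs s \<longleftrightarrow> (\<exists>Bas. finite_dimensional_vector_space s Bas)"

definition dual_space :: "('k::field \<Rightarrow> 'a::ab_group_add \<Rightarrow> 'a) \<Rightarrow> ('a \<Rightarrow> 'k) set" where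
  "dual_space s = {f. Vector_Spaces.linear s (*) f}"

definition bilinear_op :: "('k::field \<Rightarrow> 'a::ab_group_add \<Rightarrow> 'a) \<Rightarrow> ('a \<Rightarrow> 'a \<Rightarrow> 'a) \<Rightarrow> bool" where
  "bilinear_op s m \<longleftrightarrow> (\<forall>x. Vector_Spaces.linear s s (m x)) \<and> (\<forall>y. Vector_Spaces.linear s s (\<lambda>x. m x y))"

definition bilinear_form :: "('k::field \<Rightarrow> 'a::ab_group_add \<Rightarrow> 'a) \<Rightarrow> ('a \<Rightarrow> 'a \<Rightarrow> 'k) \<Rightarrow> bool" where
  "bilinear_form s B \<longleftrightarrow> (\<forall>x. Vector_Spaces.linear s (*) (B x)) \<and> (\<forall>y. Vector_Spaces.linear s (*) (\<lambda>x. B x y))"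

definition nondegenerate :: "('a::ab_group_add \<Rightarrow> 'a \<Rightarrow> 'k::field) \<Rightarrow> bool" where
  "nondegenerate B \<longleftrightarrow> (\<forall>x. (\<forall>y. B x y = 0) \<longrightarrow> x = 0)"

definition skew_symmetric :: "('a \<Rightarrow> 'a \<Rightarrow> 'k::field) \<Rightarrow> bool" where
  "skew_symmetric B \<longleftrightarrow> (\<forall>x y. B x y = - B y x)"

definition dual_pre_poisson :: "('a::ab_group_add \<Rightarrow> 'a \<Rightarrow> 'a) \<Rightarrow> ('a \<Rightarrow> 'a \<Rightarrow> 'a) \<Rightarrow> bool" where
  "dual_pre_poisson c b \<longleftrightarrow>
     (\<forall>x y z. c x (c y z) = c (c x y) z \<and> c (c x y) z = c (c y x) z) \<and>
     (\<forall>x y z. b x (b y z) = b (b x y) z + b y (b x z)) \<and>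
     (\<forall>x y z. b x (c y z) = c (b x y) z + c y (b x z)) \<and>
     (\<forall>x y z. b (c x y) z = c x (b y z) + c y (b x z)) \<and>
     (\<forall>x y z. c (b x y) z = - c (b y x) z)"

definition invariant_form :: "('a::ab_group_add \<Rightarrow> 'a \<Rightarrow> 'a) \<Rightarrow> ('a \<Rightarrow> 'a \<Rightarrow> 'a) \<Rightarrow> ('a \<Rightarrow> 'a \<Rightarrow> 'k) \<Rightarrow> bool" where
  "invariant_form c b B \<longleftrightarrow>
     (\<forall>x y z. B (c x y) z = B x (c y z - c z y)) \<and>
     (\<forall>x y z. B (b x y) z = B x (b y z + b z y))"

definition Lop :: "('a \<Rightarrow> 'a \<Rightarrow> 'a) \<Rightarrow> 'a \<Rightarrow> 'a \<Rightarrow> 'a" where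
  "Lop m x = (\<lambda>y. m x y)"

definition Rop :: "('a \<Rightarrow> 'a \<Rightarrow> 'a) \<Rightarrow> 'a \<Rightarrow> 'a \<Rightarrow> 'a" where
  "Rop m x = (\<lambda>y. m y x)"

definition dual_map :: "('a \<Rightarrow> 'a \<Rightarrow> 'a) \<Rightarrow> 'a \<Rightarrow> ('a \<Rightarrow> 'k::field) \<Rightarrow> ('a \<Rightarrow> 'k)" where
  "dual_map f x a = (\<lambda>y. - a (f x y))"

definition reps_equivalent ::
  "('k::field \<Rightarrow> 'a::ab_group_add \<Rightarrow> 'a) \<Rightarrow>
   ('a \<Rightarrow> 'a \<Rightarrow> 'a) \<Rightarrow> ('a \<Rightarrow> 'a \<Rightarrow> 'a) \<Rightarrow> ('a \<Rightarrow> 'a \<Rightarrow> 'a) \<Rightarrow> ('a \<Rightarrow> 'a \<Rightarrow> 'a) \<Rightarrow>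
   ('a \<Rightarrow> ('a \<Rightarrow> 'k) \<Rightarrow> ('a \<Rightarrow> 'k)) \<Rightarrow> ('a \<Rightarrow> ('a \<Rightarrow> 'k) \<Rightarrow> ('a \<Rightarrow> 'k)) \<Rightarrow>
   ('a \<Rightarrow> ('a \<Rightarrow> 'k) \<Rightarrow> ('a \<Rightarrow> 'k)) \<Rightarrow> ('a \<Rightarrow> ('a \<Rightarrow> 'k) \<Rightarrow> ('a \<Rightarrow> 'k)) \<Rightarrow> bool" where
  "reps_equivalent s l1 r1 l1' r1' l2 r2 l2' r2' \<longleftrightarrow>
    (\<exists>\<phi> :: 'a \<Rightarrow> ('a \<Rightarrow> 'k).
       (\<forall>u v. \<phi> (u + v) = (\<lambda>y. \<phi> u y + \<phi> v y)) \<and>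
       (\<forall>c u. \<phi> (s c u) = (\<lambda>y. c * \<phi> u y)) \<and>
       bij_betw \<phi> UNIV (dual_space s) \<and>
       (\<forall>x v. \<phi> (l1 x v) = l2 x (\<phi> v)) \<and>
       (\<forall>x v. \<phi> (r1 x v) = r2 x (\<phi> v)) \<and>
       (\<forall>x v. \<phi> (l1' x v) = l2' x (\<phi> v)) \<and>
       (\<forall>x v. \<phi> (r1' x v) = r2' x (\<phi> v)))"

end

theory Submission
  imports Defs
begin

lemma vs_mult: "vector_space ((*) :: 'k::field \<Rightarrow> 'k \<Rightarrow> 'k)"
  by unfold_locales (auto simp: algebra_simps)

lemma form_surj:
  fixes s :: "'k::field \<Rightarrow> 'a::ab_group_add \<Rightarrow> 'a" and B :: "'a \<Rightarrow> 'a \<Rightarrow> 'k"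
  assumes fd: "finite_dimensional_vector_space s Bas"
    and bf: "bilinear_form s B" and nd: "nondegenerate B"
    and f: "Vector_Spaces.linear s (*) f"
  shows "\<exists>u. B u = f"
proof -
  interpret finite_dimensional_vector_space s Bas by fact
  interpret P: vector_space_pair s "(*)"
    by (intro vector_space_pair.intro vs_mult) unfold_locales
  interpret P2: vector_space_pair s s
    by (intro vector_space_pair.intro) unfold_locales
  have lB: "Vector_Spaces.linear s (*) (B x)" for x using bf by (simp add: bilinear_form_def)
  have lB2: "Vector_Spaces.linear s (*) (\<lambda>x. B x y)" for y using bf by (simp add: bilinear_form_def)
  have Badd: "B (x + y) z = B x z + B y z" for x y z
    using P.linear_add[OF lB2[of z]] by simp
  have Bsc: "B (s a x) z = a * B x z" for a x z
    using P.linear_scale[OF lB2[of z]] by simp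
  define M where "M u = (\<Sum>e\<in>Bas. s (B u e) e)" for u
  have linM: "Vector_Spaces.linear s s M"
  proof (intro Vector_Spaces.linear_iff[THEN iffD2] conjI allI)
    show "vector_space s" by unfold_locales
    show "vector_space s" by unfold_locales
    show "M (x + y) = M x + M y" for x y
      by (simp add: M_def Badd scale_left_distrib sum.distrib)
    show "M (s a x) = s a (M x)" for a x
      by (simp add: M_def Bsc scale_sum_right)
  qed
  have ker: "u = 0" if "M u = 0" for u
  proof -
    have "\<forall>e\<in>Bas. B u e = 0"
      using that independent_Basis finite_Basis unfolding independent_explicit M_def by blast
    then have "B u y = 0" for y
      using P.linear_eq_on[OF lB[of u] P.linear_zero, of y Bas] span_Basis by auto
    then show ?thesis using nd by (simp add: nondegenerate_def)
  qed
  have "inj M"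
    using ker P2.linear_inj_iff_eq_0[OF linM] by blast
  then have "surj M" using linear_inj_imp_surj[OF linM] by blast
  then obtain u where u: "M u = (\<Sum>e\<in>Bas. s (f e) e)" by (metis surjD)
  have sz: "(\<Sum>e\<in>Bas. s (B u e - f e) e) = 0"
    using u by (simp add: M_def scale_left_diff_distrib sum_subtractf)
  have ind: "\<forall>c. (\<Sum>v\<in>Bas. s (c v) v) = 0 \<longrightarrow> (\<forall>v \<in> Bas. c v = 0)"
    using independent_Basis unfolding independent_explicit by blast
  have "\<forall>e\<in>Bas. B u e - f e = 0"
    using ind[rule_format, OF sz] by blast
  then have "B u y = f y" for y
    using P.linear_eq_on[OF lB[of u] f, of y Bas] span_Basis by auto
  then show ?thesis by blast
qed

theorem proposition2p40:
  fixes s :: "'k::field_char_0 \<Rightarrow> 'a::ab_group_add \<Rightarrow> 'a"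
    and c b :: "'a \<Rightarrow> 'a \<Rightarrow> 'a"
  assumes vs: "vector_space s"
    and fd: "fin_dim_vs s"
    and bil_c: "bilinear_op s c"
    and bil_b: "bilinear_op s b"
    and dpp: "dual_pre_poisson c b"
  shows "((\<exists>B :: 'a \<Rightarrow> 'a \<Rightarrow> 'k. bilinear_form s B \<and> nondegenerate B \<and> skew_symmetric B
              \<and> invariant_form c b B) \<longrightarrow>
          reps_equivalent s (Lop c) (Rop c) (Lop b) (Rop b)
            (\<lambda>x a y. - dual_map (Lop c) x a y)
            (\<lambda>x a y. - dual_map (Lop c) x a y + dual_map (Rop c) x a y)
            (\<lambda>x a. dual_map (Lop b) x a)
            (\<lambda>x a y. - dual_map (Lop b) x a y - dual_map (Rop b) x a y))
       \<and> (reps_equivalent s (Lop c) (Rop c) (Lop b) (Rop b)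
            (\<lambda>x a y. - dual_map (Lop c) x a y)
            (\<lambda>x a y. - dual_map (Lop c) x a y + dual_map (Rop c) x a y)
            (\<lambda>x a. dual_map (Lop b) x a)
            (\<lambda>x a y. - dual_map (Lop b) x a y - dual_map (Rop b) x a y) \<longrightarrow>
          (\<exists>B :: 'a \<Rightarrow> 'a \<Rightarrow> 'k. bilinear_form s B \<and> nondegenerate B \<and> invariant_form c b B))"
  proof (intro conjI impI)
  interpret V: vector_space s by fact
  interpret P: vector_space_pair s "(*)"
    by (intro vector_space_pair.intro vs_mult vs)
  {
    assume "\<exists>B :: 'a \<Rightarrow> 'a \<Rightarrow> 'k. bilinear_form s B \<and> nondegenerate B \<and> skew_symmetric B
              \<and> invariant_form c b B"
    then obtain B :: "'a \<Rightarrow> 'a \<Rightarrow> 'k" where bf: "bilinear_form s B" and nd: "nondegenerate B"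
      and sk: "skew_symmetric B" and inv: "invariant_form c b B" by blast
    obtain Bas where fdv: "finite_dimensional_vector_space s Bas" using fd fin_dim_vs_def by blast
    have lB: "Vector_Spaces.linear s (*) (B x)" for x using bf by (simp add: bilinear_form_def)
    have lB2: "Vector_Spaces.linear s (*) (\<lambda>x. B x y)" for y using bf by (simp add: bilinear_form_def)
    have Badd: "B (x + y) z = B x z + B y z" for x y z
      using P.linear_add[OF lB2[of z]] by simp
    have Bsc: "B (s a x) z = a * B x z" for a x z
      using P.linear_scale[OF lB2[of z]] by simp
    have Bdiff1: "B (x - y) z = B x z - B y z" for x y z
      using P.linear_diff[OF lB2[of z]] by simp
    have Bdiff2: "B z (x - y) = B z x - B z y" for x y z
      using P.linear_diff[OF lB[of z]] by simp
    have Badd2: "B z (x + y) = B z x + B z y" for x y z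
      using P.linear_add[OF lB[of z]] by simp
    have skw: "B x y = - B y x" for x y using sk unfolding skew_symmetric_def by blast
    have i1: "B (c x y) z = B x (c y z - c z y)" for x y z using inv by (simp add: invariant_form_def)
    have i2: "B (b x y) z = B x (b y z + b z y)" for x y z using inv by (simp add: invariant_form_def)
    show "reps_equivalent s (Lop c) (Rop c) (Lop b) (Rop b)
            (\<lambda>x a y. - dual_map (Lop c) x a y)
            (\<lambda>x a y. - dual_map (Lop c) x a y + dual_map (Rop c) x a y)
            (\<lambda>x a. dual_map (Lop b) x a)
            (\<lambda>x a y. - dual_map (Lop b) x a y - dual_map (Rop b) x a y)"
      unfolding reps_equivalent_def
    proof (rule exI[of _ B], intro conjI allI)
      show "B (u + v) = (\<lambda>y. B u y + B v y)" for u v by (rule ext) (simp add: Badd)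
      show "B (s a u) = (\<lambda>y. a * B u y)" for a u by (rule ext) (simp add: Bsc)
      show "bij_betw B UNIV (dual_space s)"
        unfolding bij_betw_def
      proof
        show "inj B"
        proof (rule injI)
          fix u v assume "B u = B v"
          then have "\<forall>y. B (u - v) y = 0" by (simp add: Bdiff1)
          then have "u - v = 0" using nd unfolding nondegenerate_def by blast
          then show "u = v" by simp
        qed
        show "range B = dual_space s"
        proof
          show "range B \<subseteq> dual_space s" using lB by (auto simp: dual_space_def)
          show "dual_space s \<subseteq> range B"
            using form_surj[OF fdv bf nd] by (auto simp: dual_space_def)
        qed
      qed
      show "B (Lop c x v) = (\<lambda>y. - dual_map (Lop c) x (B v) y)" for x v
      proof (rule ext)
        fix y
        have "B (c x v) y = B x (c v y) - B x (c y v)" by (simp add: i1 Bdiff2)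
        moreover have "B v (c x y) = - (B x (c y v) - B x (c v y))"
          by (subst skw) (simp add: i1 Bdiff2)
        ultimately show "B (Lop c x v) y = - dual_map (Lop c) x (B v) y"
          by (simp add: Lop_def dual_map_def)
      qed
      show "B (Rop c x v) = (\<lambda>y. - dual_map (Lop c) x (B v) y + dual_map (Rop c) x (B v) y)" for x v
        by (rule ext) (simp add: Lop_def Rop_def dual_map_def i1 Bdiff2)
      show "B (Lop b x v) = dual_map (Lop b) x (B v)" for x v
      proof (rule ext)
        fix y
        have "B (b x v) y = B x (b v y) + B x (b y v)" by (simp add: i2 Badd2)
        moreover have "B v (b x y) = - (B x (b y v) + B x (b v y))"
          by (subst skw) (simp add: i2 Badd2)
        ultimately show "B (Lop b x v) y = dual_map (Lop b) x (B v) y"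
          by (simp add: Lop_def dual_map_def)
      qed
      show "B (Rop b x v) = (\<lambda>y. - dual_map (Lop b) x (B v) y - dual_map (Rop b) x (B v) y)" for x v
        by (rule ext) (simp add: Lop_def Rop_def dual_map_def i2 Badd2)
    qed
  }
  {
    assume "reps_equivalent s (Lop c) (Rop c) (Lop b) (Rop b)
            (\<lambda>x a y. - dual_map (Lop c) x a y)
            (\<lambda>x a y. - dual_map (Lop c) x a y + dual_map (Rop c) x a y)
            (\<lambda>x a. dual_map (Lop b) x a)
            (\<lambda>x a y. - dual_map (Lop b) x a y - dual_map (Rop b) x a y)"
    then obtain \<phi> :: "'a \<Rightarrow> 'a \<Rightarrow> 'k" where
      padd: "\<And>u v. \<phi> (u + v) = (\<lambda>y. \<phi> u y + \<phi> v y)" and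
      psc: "\<And>a u. \<phi> (s a u) = (\<lambda>y. a * \<phi> u y)" and
      pbij: "bij_betw \<phi> UNIV (dual_space s)" and
      pr1: "\<And>x v. \<phi> (Rop c x v) = (\<lambda>y. - dual_map (Lop c) x (\<phi> v) y + dual_map (Rop c) x (\<phi> v) y)" and
      pr2: "\<And>x v. \<phi> (Rop b x v) = (\<lambda>y. - dual_map (Lop b) x (\<phi> v) y - dual_map (Rop b) x (\<phi> v) y)"
      unfolding reps_equivalent_def by blast
    have lp: "Vector_Spaces.linear s (*) (\<phi> x)" for x
      using pbij by (auto simp: bij_betw_def dual_space_def)
    have lp2: "Vector_Spaces.linear s (*) (\<lambda>x. \<phi> x y)" for y
      unfolding Vector_Spaces.linear_iff using vs vs_mult padd psc by simp
    have p0: "\<phi> 0 = (\<lambda>y. 0)"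
    proof -
      have "\<phi> (0 + 0) = (\<lambda>y. \<phi> 0 y + \<phi> 0 y)" by (rule padd)
      then show ?thesis by (metis add.right_neutral add_cancel_right_right)
    qed
    have pdiff: "\<phi> x (y - z) = \<phi> x y - \<phi> x z" for x y z
      using P.linear_diff[OF lp[of x]] by simp
    show "\<exists>B :: 'a \<Rightarrow> 'a \<Rightarrow> 'k. bilinear_form s B \<and> nondegenerate B \<and> invariant_form c b B"
    proof (rule exI[of _ \<phi>], intro conjI)
      show "bilinear_form s \<phi>" using lp lp2 by (simp add: bilinear_form_def)
      show "nondegenerate \<phi>"
        unfolding nondegenerate_def
      proof (intro allI impI)
        fix x assume "\<forall>y. \<phi> x y = 0"
        then have "\<phi> x = \<phi> 0" using p0 by auto
        then show "x = 0" using pbij by (auto simp: bij_betw_def dest: injD)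
      qed
      show "invariant_form c b \<phi>"
        unfolding invariant_form_def
      proof (intro conjI allI)
        fix x y z
        show "\<phi> (c x y) z = \<phi> x (c y z - c z y)"
          using fun_cong[OF pr1[of y x], of z] by (simp add: Rop_def Lop_def dual_map_def pdiff)
        show "\<phi> (b x y) z = \<phi> x (b y z + b z y)"
          using fun_cong[OF pr2[of y x], of z] lp[of x] by (simp add: Rop_def Lop_def dual_map_def Vector_Spaces.linear_iff)
      qed
    qed
  }
qed

end
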